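(* Let $\mathcal H$ be a finite-dimensional complex Hilbert space, $A,B$ Hermitian operators on $\mathcal H$, $\rho$ a density operator on $\mathcal H$ and $|\phi\rangle$ a unit vector. Set $W_{AB}=\langle\phi|B\rho A|\phi\rangle$. Then $$\big(\langle\Delta A\rangle^{\phi}_{\rho}\big)^2\big(\langle\Delta B\rangle^{\phi}_{\rho}\big)^2\ge\Big[\tfrac{1}{2i}\operatorname{Tr}(\rho[A,B])-\operatorname{Im}W_{AB}\Big]^2+\Big[\tfrac12\operatorname{Tr}(\rho\{A,B\})-\operatorname{Re}W_{AB}\Big]^2,$$ and in particular $\big(\langle\Delta A\rangle^{\phi}_{\rho}\big)^2\big(\langle\Delta B\rangle^{\phi}_{\rho}\big)^2\ge\big[\tfrac{1}{2i}\operatorname{Tr}(\rho[A,B])-\operatorname{Im}W_{AB}\big]^2$. The same lower bound holds with $\langle\Delta A\rangle^{\phi}_{\rho},\langle\Delta B\rangle^{\phi}_{\rho}$ replaced by $\langle\Delta A_w\rangle^{\phi}_{\rho},\langle\Delta B_w\rangle^{\phi}_{\rho}$ whenever $\langle\phi|\rho|\phi\rangle>0$.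
   Context: For a density operator $\rho$, Hermitian $X$ and unit vector $|\phi\rangle$: $\big(\langle\Delta X\rangle^{\phi}_{\rho}\big)^2:=\operatorname{Tr}(X^2\rho)-\langle\phi|X\rho X|\phi\rangle$; if $\langle\phi|\rho|\phi\rangle>0$, $\big(\langle\Delta X_w\rangle^{\phi}_{\rho}\big)^2:=\operatorname{Tr}(X^2\rho)-\frac{|\langle\phi|X\rho|\phi\rangle|^2}{\langle\phi|\rho|\phi\rangle}$. $[A,B]=AB-BA$, $\{A,B\}=AB+BA$. *)

theory Defs
  imports "HOL-Analysis.Analysis"
begin

text \<open>Operators on the finite-dimensional complex Hilbert space C^'n, represented as
  complex matrices indexed by a finite type 'n (arbitrary finite dimension).\<close>

definition adjoint_mat :: "complex^'n^'n \<Rightarrow> complex^'n^'n" where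
  "adjoint_mat A = (\<chi> i j. cnj (A $ j $ i))"

definition hermitian_mat :: "complex^'n^'n \<Rightarrow> bool" where
  "hermitian_mat A \<longleftrightarrow> adjoint_mat A = A"

definition cinner :: "complex^'n \<Rightarrow> complex^'n \<Rightarrow> complex" where
  "cinner x y = (\<Sum>i\<in>UNIV. cnj (x $ i) * y $ i)"

definition unit_vec :: "complex^'n \<Rightarrow> bool" where
  "unit_vec v \<longleftrightarrow> cinner v v = 1"

definition density_op :: "complex^'n^'n \<Rightarrow> bool" where
  "density_op \<rho> \<longleftrightarrow> hermitian_mat \<rho> \<and>
     (\<forall>v. Im (cinner v (\<rho> *v v)) = 0 \<and> Re (cinner v (\<rho> *v v)) \<ge> 0) \<and>
     trace \<rho> = 1"

definition commutator :: "complex^'n^'n \<Rightarrow> complex^'n^'n \<Rightarrow> complex^'n^'n" where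
  "commutator A B = A ** B - B ** A"

definition anticommutator :: "complex^'n^'n \<Rightarrow> complex^'n^'n \<Rightarrow> complex^'n^'n" where
  "anticommutator A B = A ** B + B ** A"

text \<open>(\<langle>\<Delta>X\<rangle>^\<phi>_\<rho>)^2 = Tr(X^2 \<rho>) - \<langle>\<phi>|X\<rho>X|\<phi>\<rangle>  (a real number for Hermitian X and
  density \<rho>; we take its real part).\<close>
definition var_phi :: "complex^'n^'n \<Rightarrow> complex^'n^'n \<Rightarrow> complex^'n \<Rightarrow> real" where
  "var_phi \<rho> X \<phi> = Re (trace (X ** X ** \<rho>) - cinner \<phi> ((X ** \<rho> ** X) *v \<phi>))"

text \<open>(\<langle>\<Delta>X_w\<rangle>^\<phi>_\<rho>)^2 = Tr(X^2 \<rho>) - |\<langle>\<phi>|X\<rho>|\<phi>\<rangle>|^2 / \<langle>\<phi>|\<rho>|\<phi>\<rangle>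
  (meaningful when \<langle>\<phi>|\<rho>|\<phi>\<rangle> > 0).\<close>
definition var_w_phi :: "complex^'n^'n \<Rightarrow> complex^'n^'n \<Rightarrow> complex^'n \<Rightarrow> real" where
  "var_w_phi \<rho> X \<phi> = Re (trace (X ** X ** \<rho>))
     - (cmod (cinner \<phi> ((X ** \<rho>) *v \<phi>)))^2 / Re (cinner \<phi> (\<rho> *v \<phi>))"

end

theory Submission imports Defs begin

lemma quad_aux:
  fixes a b k1 k2 :: complex
  assumes H: "\<And>z. Im (a + z*k1 + cnj z*k2 + cnj z*z*b) = 0 \<and> Re (a + z*k1 + cnj z*k2 + cnj z*z*b) \<ge> 0"
    and b0: "Re b \<ge> 0"
  shows "(cmod k2)^2 \<le> Re a * Re b"
proof -
  have i0: "Im a = 0" "Re a \<ge> 0" using H[of 0] by auto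
  have i1: "Im (a+k1+k2+b) = 0" using H[of 1] by simp
  have i2: "Im (a-k1-k2+b) = 0" using H[of "-1"] by simp
  have i3: "Im (a+\<i>*k1-\<i>*k2+b) = 0" using H[of "\<i>"] by simp
  have ib: "Im b = 0" using i0 i1 i2 by simp
  have k1: "k1 = cnj k2" using i0 i1 i2 i3 ib by (simp add: complex_eq_iff)
  define n where "n = (cmod k2)^2"
  have key: "Re a - 2*t*n + t^2*n*Re b \<ge> 0" for t :: real
  proof -
    obtain x y where k2: "k2 = Complex x y" by (cases k2)
    obtain c where bb: "b = Complex c 0" using ib by (cases b) auto
    have "Re (a + (- of_real t * k2)*k1 + cnj (- of_real t * k2)*k2 + cnj (- of_real t * k2)*(- of_real t * k2)*b) = Re a - 2*t*n + t^2*n*Re b"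
      unfolding n_def k1 k2 bb using cmod_power2[of "Complex x y"] by (simp add: power2_eq_square algebra_simps)
    thus ?thesis using H[of "- of_real t * k2"] by simp
  qed
  show ?thesis
  proof (cases "n = 0")
    case True thus ?thesis using i0 b0 n_def by simp
  next
    case False
    hence np: "n > 0" unfolding n_def by simp
    show ?thesis
    proof (cases "Re b = 0")
      case True
      have "Re a - 2*((Re a + 1)/(2*n))*n \<ge> 0" using key[of "(Re a + 1)/(2*n)"] True by simp
      thus ?thesis using np by (simp add: field_simps)
    next
      case False
      hence bp: "Re b > 0" using b0 by simp
      have "Re a - 2*(1/Re b)*n + (1/Re b)^2*n*Re b \<ge> 0" using key[of "1/Re b"] by simp
      hence "Re a - n / Re b \<ge> 0" using bp by (simp add: field_simps power2_eq_square)
      thus ?thesis using bp unfolding n_def by (simp add: field_simps)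
    qed
  qed
qed

definition Phi :: "complex^'n \<Rightarrow> complex^'n^'n" where
  "Phi v = (\<chi> i j. v$i * cnj (v$j))"

definition SS :: "complex^'n^'n \<Rightarrow> complex^'n^'n \<Rightarrow> complex^'n^'n \<Rightarrow> complex" where
  "SS r X Y = trace (adjoint_mat X ** r ** Y)"

lemma adj_mult: "adjoint_mat (X ** Y) = adjoint_mat Y ** adjoint_mat X"
  by (simp add: adjoint_mat_def matrix_matrix_mult_def vec_eq_iff mult.commute)

lemma adj_sub: "adjoint_mat (X - Y) = adjoint_mat X - adjoint_mat Y"
  by (simp add: adjoint_mat_def vec_eq_iff)

lemma adj_one: "adjoint_mat (mat 1 :: complex^'n^'n) = mat 1"
  by (simp add: adjoint_mat_def vec_eq_iff mat_def)

lemma adj_Phi: "adjoint_mat (Phi v) = Phi v"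
  by (simp add: adjoint_mat_def vec_eq_iff Phi_def mult.commute)

lemma trace_adj: "trace (adjoint_mat M) = cnj (trace M)"
  by (simp add: adjoint_mat_def trace_def)

lemma trace_Phi: "trace (M ** Phi v) = cinner v (M *v v)"
  by (simp add: trace_def cinner_def Phi_def matrix_matrix_mult_def matrix_vector_mult_def
      sum_distrib_left mult_ac)

lemma mat_sub_ldistrib: "(A::complex^'n^'n) ** (B - C) = A ** B - A ** C"
  by (simp add: matrix_matrix_mult_def vec_eq_iff algebra_simps sum_subtractf)

lemma mat_sub_rdistrib: "((B::complex^'n^'n) - C) ** A = B ** A - C ** A"
  by (simp add: matrix_matrix_mult_def vec_eq_iff algebra_simps sum_subtractf)

lemma Phi_idem: assumes "unit_vec v" shows "Phi v ** Phi v = Phi v"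
proof -
  have "(\<Sum>k\<in>UNIV. cnj (v$k) * v$k) = 1" using assms by (simp add: unit_vec_def cinner_def)
  then have "(\<Sum>k\<in>UNIV. v$i * cnj (v$k) * (v$k * cnj (v$j))) = v$i * cnj (v$j)" for i j
  proof -
    have "(\<Sum>k\<in>UNIV. v$i * cnj (v$k) * (v$k * cnj (v$j))) = v$i * cnj (v$j) * (\<Sum>k\<in>UNIV. cnj (v$k) * v$k)"
      by (simp add: sum_distrib_left mult_ac)
    thus ?thesis using \<open>(\<Sum>k\<in>UNIV. cnj (v$k) * v$k) = 1\<close> by simp
  qed
  then show ?thesis
    by (simp add: Phi_def matrix_matrix_mult_def vec_eq_iff)
qed

lemma cinner_adj: "cinner x (M *v y) = cinner (adjoint_mat M *v x) y"
  apply (simp add: cinner_def adjoint_mat_def matrix_vector_mult_def sum_distrib_left sum_distrib_right mult_ac)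
  apply (subst sum.swap) ..

lemma cinner_add_left: "cinner (x + y) w = cinner x w + cinner y w"
  by (simp add: cinner_def algebra_simps sum.distrib)
lemma cinner_add_right: "cinner w (x + y) = cinner w x + cinner w y"
  by (simp add: cinner_def algebra_simps sum.distrib)
lemma cinner_scale_left: "cinner (c *s x) w = cnj c * cinner x w"
  by (simp add: cinner_def vector_scalar_mult_def sum_distrib_left mult_ac)
lemma cinner_scale_right: "cinner w (c *s x) = c * cinner w x"
  by (simp add: cinner_def vector_scalar_mult_def sum_distrib_left mult_ac)

lemma vec_expand:
  fixes M :: "complex^'n^'n"
  shows "cinner (x + z *s y) (M *v (x + z *s y)) = cinner x (M*v x) + z * cinner x (M *v y)
     + cnj z * cinner y (M *v x) + cnj z * z * cinner y (M*v y)"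
  by (simp add: matrix_vector_right_distrib vector_scalar_commute cinner_add_left cinner_add_right
     cinner_scale_left cinner_scale_right algebra_simps)

definition col :: "complex^'n^'n \<Rightarrow> 'n \<Rightarrow> complex^'n" where
  "col X i = (\<chi> j. X$j$i)"

lemma SS_col: "SS r X Y = (\<Sum>i\<in>UNIV. cinner (col X i) (r *v col Y i))"
  unfolding SS_def trace_def
  apply (simp add: col_def cinner_def adjoint_mat_def matrix_matrix_mult_def matrix_vector_mult_def
    sum_distrib_left sum_distrib_right mult_ac)
  apply (rule sum.cong, rule refl)
  apply (subst sum.swap) ..

definition lin :: "complex^'n^'n \<Rightarrow> complex \<Rightarrow> complex^'n^'n \<Rightarrow> complex^'n^'n" where
  "lin X z Y = (\<chi> i j. X$i$j + z * Y$i$j)"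

lemma col_lin: "col (lin X z Y) i = col X i + z *s col Y i"
  by (simp add: col_def lin_def vec_eq_iff vector_scalar_mult_def)

lemma SS_expand: "SS r (lin X z Y) (lin X z Y) = SS r X X + z * SS r X Y + cnj z * SS r Y X + cnj z * z * SS r Y Y"
  unfolding SS_col col_lin vec_expand
  by (simp add: sum.distrib sum_distrib_left)

lemma SS_pos: assumes "density_op r" shows "Im (SS r X X) = 0 \<and> Re (SS r X X) \<ge> 0"
  using assms unfolding SS_col density_op_def
  by (auto simp: Im_sum Re_sum intro: sum_nonneg)

lemma SS_CS: assumes "density_op r"
  shows "(cmod (SS r Y X))^2 \<le> Re (SS r X X) * Re (SS r Y Y)"
  apply (rule quad_aux)
  using SS_pos[OF assms, of "lin X _ Y"] SS_pos[OF assms, of Y] unfolding SS_expand by auto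

lemma vec_CS: assumes "density_op r"
  shows "(cmod (cinner y (r *v x)))^2 \<le> Re (cinner x (r *v x)) * Re (cinner y (r *v y))"
proof (rule quad_aux[where ?k1.0="cinner x (r *v y)"])
  have P: "\<forall>v. Im (cinner v (r *v v)) = 0 \<and> 0 \<le> Re (cinner v (r *v v))"
    using assms unfolding density_op_def by blast
  show "Im (cinner x (r *v x) + z * cinner x (r *v y) + cnj z * cinner y (r *v x) + cnj z * z * cinner y (r *v y)) = 0 \<and>
        0 \<le> Re (cinner x (r *v x) + z * cinner x (r *v y) + cnj z * cinner y (r *v x) + cnj z * z * cinner y (r *v y))" for z
    using P[rule_format, of "x + z *s y"] unfolding vec_expand .
  show "0 \<le> Re (cinner y (r *v y))" using P by blast
qed

lemma P_idem: assumes "unit_vec v"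
  shows "(mat 1 - Phi v) ** (mat 1 - Phi v) = mat 1 - Phi v"
  by (simp add: mat_sub_ldistrib mat_sub_rdistrib Phi_idem[OF assms])

lemma SS_P: assumes "unit_vec v"
  shows "SS r (X ** (mat 1 - Phi v)) (Y ** (mat 1 - Phi v)) =
     trace (adjoint_mat X ** r ** Y) - cinner v ((adjoint_mat X ** r ** Y) *v v)"
proof -
  define P where "P = mat 1 - Phi v"
  define Q where "Q = adjoint_mat X ** r ** Y"
  have aP: "adjoint_mat P = P" unfolding P_def by (simp add: adj_sub adj_one adj_Phi)
  have "SS r (X ** P) (Y ** P) = trace (P ** (Q ** P))"
    unfolding SS_def adj_mult aP Q_def by (simp add: matrix_mul_assoc)
  also have "\<dots> = trace (Q ** (P ** P))" using trace_mul_sym[of P "Q ** P"] by (simp add: matrix_mul_assoc)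
  also have "\<dots> = trace Q - cinner v (Q *v v)"
    unfolding P_def P_idem[OF assms] by (simp add: mat_sub_ldistrib trace_sub trace_Phi)
  finally show ?thesis unfolding P_def Q_def .
qed

lemma tr_cyc3: "trace ((X::complex^'n^'n) ** Y ** Z) = trace (Y ** Z ** X)"
  using trace_mul_sym[of X "Y ** Z"] by (simp add: matrix_mul_assoc)

theorem mainTheorem8:
  fixes A B \<rho> :: "complex^'n^'n" and \<phi> :: "complex^'n"
  assumes "hermitian_mat A" and "hermitian_mat B"
    and "density_op \<rho>" and "unit_vec \<phi>"
  defines "W \<equiv> cinner \<phi> ((B ** \<rho> ** A) *v \<phi>)"
  defines "C \<equiv> Re (trace (\<rho> ** commutator A B) / (2 * \<i>)) - Im W"
  defines "D \<equiv> Re (trace (\<rho> ** anticommutator A B) / 2) - Re W"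
  shows "var_phi \<rho> A \<phi> * var_phi \<rho> B \<phi> \<ge> C\<^sup>2 + D\<^sup>2
         \<and> var_phi \<rho> A \<phi> * var_phi \<rho> B \<phi> \<ge> C\<^sup>2
         \<and> (Re (cinner \<phi> (\<rho> *v \<phi>)) > 0 \<longrightarrow>
               var_w_phi \<rho> A \<phi> * var_w_phi \<rho> B \<phi> \<ge> C\<^sup>2 + D\<^sup>2
             \<and> var_w_phi \<rho> A \<phi> * var_w_phi \<rho> B \<phi> \<ge> C\<^sup>2)"
proof -
  define P where "P = mat 1 - Phi \<phi>"
  have hA: "adjoint_mat A = A" and hB: "adjoint_mat B = B" and hr: "adjoint_mat \<rho> = \<rho>"
    using assms(1,2,3) unfolding hermitian_mat_def density_op_def by auto
  have varA: "var_phi \<rho> A \<phi> = Re (SS \<rho> (A ** P) (A ** P))"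
  proof -
    have "trace (A ** A ** \<rho>) = trace (A ** \<rho> ** A)"
      by (rule tr_cyc3)
    thus ?thesis unfolding P_def SS_P[OF assms(4)] hA var_phi_def by (simp only:)
  qed
  have varB: "var_phi \<rho> B \<phi> = Re (SS \<rho> (B ** P) (B ** P))"
  proof -
    have "trace (B ** B ** \<rho>) = trace (B ** \<rho> ** B)"
      by (rule tr_cyc3)
    thus ?thesis unfolding P_def SS_P[OF assms(4)] hB var_phi_def by (simp only:)
  qed
  define t where "t = trace (\<rho> ** (A ** B))"
  have kk: "SS \<rho> (B ** P) (A ** P) = t - W"
  proof -
    have "trace (B ** \<rho> ** A) = trace (\<rho> ** (A ** B))"
      using tr_cyc3[of B \<rho> A] by (simp add: matrix_mul_assoc)
    thus ?thesis unfolding P_def SS_P[OF assms(4)] hB W_def t_def by (simp only:)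
  qed
  have ct: "trace (\<rho> ** (B ** A)) = cnj t"
    unfolding t_def trace_adj[symmetric] adj_mult hA hB hr
    by (rule trace_mul_sym)
  have comm: "trace (\<rho> ** commutator A B) = t - cnj t"
    unfolding commutator_def mat_sub_ldistrib trace_sub ct t_def ..
  have acomm: "trace (\<rho> ** anticommutator A B) = t + cnj t"
    unfolding anticommutator_def matrix_add_ldistrib trace_add ct t_def ..
  have CD: "C = Im (t - W)" "D = Re (t - W)"
    unfolding C_def D_def comm acomm by (simp_all add: complex_eq_iff Re_divide Im_divide)
  have CS: "C\<^sup>2 + D\<^sup>2 \<le> var_phi \<rho> A \<phi> * var_phi \<rho> B \<phi>"
    using SS_CS[OF assms(3), of "B ** P" "A ** P"] unfolding varA varB kk CD cmod_power2 by simp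
  have vA0: "var_phi \<rho> A \<phi> \<ge> 0" unfolding varA using SS_pos[OF assms(3)] by blast
  have vB0: "var_phi \<rho> B \<phi> \<ge> 0" unfolding varB using SS_pos[OF assms(3)] by blast
  have wk: "var_w_phi \<rho> X \<phi> \<ge> var_phi \<rho> X \<phi>" if hX: "adjoint_mat X = X"
      and rp: "Re (cinner \<phi> (\<rho> *v \<phi>)) > 0" for X
  proof -
    have e1: "cinner \<phi> ((X ** \<rho>) *v \<phi>) = cinner (X *v \<phi>) (\<rho> *v \<phi>)"
      by (simp flip: matrix_vector_mul_assoc add: cinner_adj hX)
    have e2: "cinner \<phi> ((X ** \<rho> ** X) *v \<phi>) = cinner (X *v \<phi>) (\<rho> *v (X *v \<phi>))"
      by (simp flip: matrix_vector_mul_assoc add: cinner_adj hX)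
    have "(cmod (cinner (X *v \<phi>) (\<rho> *v \<phi>)))^2 \<le> Re (cinner \<phi> (\<rho> *v \<phi>)) * Re (cinner \<phi> ((X ** \<rho> ** X) *v \<phi>))"
      unfolding e2 by (rule vec_CS[OF assms(3)])
    hence "(cmod (cinner \<phi> ((X ** \<rho>) *v \<phi>)))^2 / Re (cinner \<phi> (\<rho> *v \<phi>)) \<le> Re (cinner \<phi> ((X ** \<rho> ** X) *v \<phi>))"
      unfolding e1 using rp by (simp add: divide_simps mult.commute)
    thus ?thesis unfolding var_w_phi_def var_phi_def by simp
  qed
  have C2: "C\<^sup>2 \<le> C\<^sup>2 + D\<^sup>2" by simp
  show ?thesis
  proof (intro conjI impI)
    show "C\<^sup>2 + D\<^sup>2 \<le> var_phi \<rho> A \<phi> * var_phi \<rho> B \<phi>" by (rule CS)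
    show "C\<^sup>2 \<le> var_phi \<rho> A \<phi> * var_phi \<rho> B \<phi>" using CS C2 by linarith
    assume rp: "Re (cinner \<phi> (\<rho> *v \<phi>)) > 0"
    have "var_phi \<rho> A \<phi> * var_phi \<rho> B \<phi> \<le> var_w_phi \<rho> A \<phi> * var_w_phi \<rho> B \<phi>"
      using wk[OF hA rp] wk[OF hB rp] vA0 vB0 by (intro mult_mono) auto
    thus "C\<^sup>2 + D\<^sup>2 \<le> var_w_phi \<rho> A \<phi> * var_w_phi \<rho> B \<phi>"
      and "C\<^sup>2 \<le> var_w_phi \<rho> A \<phi> * var_w_phi \<rho> B \<phi>" using CS C2 by linarith+
  qed
qed

end
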